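(* Let $R$ be a Noetherian local ring and $M$ a finitely generated weakly reflexive $R$-module. Then the iterated dual $M^{\ell\ast}$ is reflexive for every $\ell\in\mathbb{N}$.
   Context: $M^\ast=\operatorname{Hom}_R(M,R)$; $M^{\ell\ast}$ is the $\ell$-fold iterated dual. $M$ is weakly reflexive if the natural map $M\to M^{\ast\ast}$ is surjective, and reflexive if it is bijective. *)

theory Defs
  imports "HOL-Algebra.Module" "HOL-Algebra.Ring_Divisibility" "HOL-Algebra.Ideal"
begin

definition lin_maps :: "'a ring \<Rightarrow> ('a, 'm) module \<Rightarrow> ('a, 'n) module \<Rightarrow> ('m \<Rightarrow> 'n) set" where
  "lin_maps R M N = {f. f \<in> carrier M \<rightarrow>\<^sub>E carrier N \<and>
      (\<forall>x\<in>carrier M. \<forall>y\<in>carrier M. f (x \<oplus>\<^bsub>M\<^esub> y) = f x \<oplus>\<^bsub>N\<^esub> f y) \<and>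
      (\<forall>a\<in>carrier R. \<forall>x\<in>carrier M. f (a \<odot>\<^bsub>M\<^esub> x) = a \<odot>\<^bsub>N\<^esub> f x)}"

definition ring_module :: "'a ring \<Rightarrow> ('a, 'a) module" where
  "ring_module R = \<lparr>carrier = carrier R, mult = mult R, one = one R,
      zero = zero R, add = add R, smult = mult R\<rparr>"

text \<open>The dual module \<open>M\<^sup>* = Hom_R(M,R)\<close> with pointwise operations.
  (The multiplicative ring fields of the record are irrelevant for modules.)\<close>
definition dual :: "'a ring \<Rightarrow> ('a, 'm) module \<Rightarrow> ('a, 'm \<Rightarrow> 'a) module" where
  "dual R M = \<lparr>carrier = lin_maps R M (ring_module R),
      mult = (\<lambda>f g. undefined), one = undefined,
      zero = (\<lambda>x\<in>carrier M. \<zero>\<^bsub>R\<^esub>),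
      add = (\<lambda>f g. \<lambda>x\<in>carrier M. f x \<oplus>\<^bsub>R\<^esub> g x),
      smult = (\<lambda>a f. \<lambda>x\<in>carrier M. a \<otimes>\<^bsub>R\<^esub> f x)\<rparr>"

definition nat_map :: "'a ring \<Rightarrow> ('a, 'm) module \<Rightarrow> 'm \<Rightarrow> (('m \<Rightarrow> 'a) \<Rightarrow> 'a)" where
  "nat_map R M x = (\<lambda>f\<in>carrier (dual R M). f x)"

definition weakly_reflexive :: "'a ring \<Rightarrow> ('a, 'm) module \<Rightarrow> bool" where
  "weakly_reflexive R M \<longleftrightarrow> nat_map R M ` carrier M = carrier (dual R (dual R M))"

definition reflexive :: "'a ring \<Rightarrow> ('a, 'm) module \<Rightarrow> bool" where
  "reflexive R M \<longleftrightarrow> bij_betw (nat_map R M) (carrier M) (carrier (dual R (dual R M)))"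

definition fin_gen :: "'a ring \<Rightarrow> ('a, 'm) module \<Rightarrow> bool" where
  "fin_gen R M \<longleftrightarrow> (\<exists>A. finite A \<and> A \<subseteq> carrier M \<and>
      carrier M = {finsum M (\<lambda>x. c x \<odot>\<^bsub>M\<^esub> x) A | c. c \<in> A \<rightarrow> carrier R})"

definition local_ring :: "'a ring \<Rightarrow> bool" where
  "local_ring R \<longleftrightarrow> cring R \<and> (\<exists>!I. maximalideal I R)"

definition module_iso :: "'a ring \<Rightarrow> ('a, 'm) module \<Rightarrow> ('a, 'n) module \<Rightarrow> bool" where
  "module_iso R M N \<longleftrightarrow> (\<exists>f \<in> lin_maps R M N. bij_betw f (carrier M) (carrier N))"

end

theory Submission
  imports Defs
begin

definition closedM :: "'a ring \<Rightarrow> ('a, 'm) module \<Rightarrow> bool" where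
  "closedM R X \<longleftrightarrow> (\<forall>x\<in>carrier X. \<forall>y\<in>carrier X. x \<oplus>\<^bsub>X\<^esub> y \<in> carrier X) \<and>
     (\<forall>a\<in>carrier R. \<forall>x\<in>carrier X. a \<odot>\<^bsub>X\<^esub> x \<in> carrier X)"

lemma module_closedM: "module R X \<Longrightarrow> closedM R X"
  unfolding closedM_def
  by (meson abelian_group.axioms(1) abelian_monoid.a_closed module.smult_closed module_def)

lemma dual_mem: "f \<in> carrier (dual R X) \<longleftrightarrow>
   f \<in> carrier X \<rightarrow>\<^sub>E carrier R \<and>
   (\<forall>x\<in>carrier X. \<forall>y\<in>carrier X. f (x \<oplus>\<^bsub>X\<^esub> y) = f x \<oplus>\<^bsub>R\<^esub> f y) \<and>
   (\<forall>a\<in>carrier R. \<forall>x\<in>carrier X. f (a \<odot>\<^bsub>X\<^esub> x) = a \<otimes>\<^bsub>R\<^esub> f x)"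
  by (simp add: dual_def lin_maps_def ring_module_def)

lemma dual_add: "f \<oplus>\<^bsub>dual R X\<^esub> g = (\<lambda>x\<in>carrier X. f x \<oplus>\<^bsub>R\<^esub> g x)"
  by (simp add: dual_def)

lemma dual_smult: "a \<odot>\<^bsub>dual R X\<^esub> f = (\<lambda>x\<in>carrier X. a \<otimes>\<^bsub>R\<^esub> f x)"
  by (simp add: dual_def)

lemma dual_closedM:
  fixes R (structure)
  assumes R: "cring R" and X: "closedM R X"
  shows "closedM R (dual R X)"
proof -
  interpret cring R by (rule R)
  have 1: "f \<oplus>\<^bsub>dual R X\<^esub> g \<in> carrier (dual R X)"
    if f: "f \<in> carrier (dual R X)" and g: "g \<in> carrier (dual R X)" for f g
  proof -
    have fc: "\<And>x. x \<in> carrier X \<Longrightarrow> f x \<in> carrier R" and gc: "\<And>x. x \<in> carrier X \<Longrightarrow> g x \<in> carrier R"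
      using f g by (auto simp: dual_mem)
    show ?thesis
      unfolding dual_mem dual_add
    proof (intro conjI ballI)
      show "(\<lambda>x\<in>carrier X. f x \<oplus> g x) \<in> carrier X \<rightarrow>\<^sub>E carrier R" using fc gc by auto
    next
      fix x y assume x: "x \<in> carrier X" and y: "y \<in> carrier X"
      have xy: "x \<oplus>\<^bsub>X\<^esub> y \<in> carrier X" using X x y by (auto simp: closedM_def)
      have "f (x \<oplus>\<^bsub>X\<^esub> y) = f x \<oplus> f y" "g (x \<oplus>\<^bsub>X\<^esub> y) = g x \<oplus> g y"
        using f g x y by (auto simp: dual_mem)
      then show "(\<lambda>x\<in>carrier X. f x \<oplus> g x) (x \<oplus>\<^bsub>X\<^esub> y) =
          (\<lambda>x\<in>carrier X. f x \<oplus> g x) x \<oplus> (\<lambda>x\<in>carrier X. f x \<oplus> g x) y"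
        using xy x y fc gc by (simp add: a_ac)
    next
      fix a x assume a: "a \<in> carrier R" and x: "x \<in> carrier X"
      have ax: "a \<odot>\<^bsub>X\<^esub> x \<in> carrier X" using X a x by (auto simp: closedM_def)
      have "f (a \<odot>\<^bsub>X\<^esub> x) = a \<otimes> f x" "g (a \<odot>\<^bsub>X\<^esub> x) = a \<otimes> g x"
        using f g a x by (auto simp: dual_mem)
      then show "(\<lambda>x\<in>carrier X. f x \<oplus> g x) (a \<odot>\<^bsub>X\<^esub> x) = a \<otimes> (\<lambda>x\<in>carrier X. f x \<oplus> g x) x"
        using ax x a fc gc by (simp add: r_distr)
    qed
  qed
  have 2: "a \<odot>\<^bsub>dual R X\<^esub> f \<in> carrier (dual R X)"
    if a: "a \<in> carrier R" and f: "f \<in> carrier (dual R X)" for a f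
  proof -
    have fc: "\<And>x. x \<in> carrier X \<Longrightarrow> f x \<in> carrier R"
      using f by (auto simp: dual_mem)
    show ?thesis
      unfolding dual_mem dual_smult
    proof (intro conjI ballI)
      show "(\<lambda>x\<in>carrier X. a \<otimes> f x) \<in> carrier X \<rightarrow>\<^sub>E carrier R" using fc a by auto
    next
      fix x y assume x: "x \<in> carrier X" and y: "y \<in> carrier X"
      have xy: "x \<oplus>\<^bsub>X\<^esub> y \<in> carrier X" using X x y by (auto simp: closedM_def)
      have "f (x \<oplus>\<^bsub>X\<^esub> y) = f x \<oplus> f y"
        using f x y by (auto simp: dual_mem)
      then show "(\<lambda>x\<in>carrier X. a \<otimes> f x) (x \<oplus>\<^bsub>X\<^esub> y) =
          (\<lambda>x\<in>carrier X. a \<otimes> f x) x \<oplus> (\<lambda>x\<in>carrier X. a \<otimes> f x) y"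
        using xy x y fc a by (simp add: r_distr)
    next
      fix b x assume b: "b \<in> carrier R" and x: "x \<in> carrier X"
      have bx: "b \<odot>\<^bsub>X\<^esub> x \<in> carrier X" using X b x by (auto simp: closedM_def)
      have "f (b \<odot>\<^bsub>X\<^esub> x) = b \<otimes> f x"
        using f b x by (auto simp: dual_mem)
      then show "(\<lambda>x\<in>carrier X. a \<otimes> f x) (b \<odot>\<^bsub>X\<^esub> x) = b \<otimes> (\<lambda>x\<in>carrier X. a \<otimes> f x) x"
        using bx x a b fc by (simp add: m_lcomm)
    qed
  qed
  show ?thesis using 1 2 unfolding closedM_def by blast
qed


lemma nat_map_app: "f \<in> carrier (dual R X) \<Longrightarrow> nat_map R X x f = f x"
  by (simp add: nat_map_def)

lemma dual_val: "f \<in> carrier (dual R X) \<Longrightarrow> x \<in> carrier X \<Longrightarrow> f x \<in> carrier R"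
  by (auto simp: dual_mem)

lemma dual_ext: "f \<in> carrier (dual R X) \<Longrightarrow> x \<notin> carrier X \<Longrightarrow> f x = undefined"
  by (auto simp: dual_mem)

lemma dual_eqI:
  assumes "f \<in> carrier (dual R X)" "g \<in> carrier (dual R X)" "\<And>x. x \<in> carrier X \<Longrightarrow> f x = g x"
  shows "f = g"
proof (rule ext)
  fix x show "f x = g x" using assms dual_ext[OF assms(1)] dual_ext[OF assms(2)] by (cases "x \<in> carrier X") auto
qed

lemma closedM_add: "closedM R X \<Longrightarrow> x \<in> carrier X \<Longrightarrow> y \<in> carrier X \<Longrightarrow> x \<oplus>\<^bsub>X\<^esub> y \<in> carrier X"
  by (simp add: closedM_def)

lemma closedM_smult: "closedM R X \<Longrightarrow> a \<in> carrier R \<Longrightarrow> x \<in> carrier X \<Longrightarrow> a \<odot>\<^bsub>X\<^esub> x \<in> carrier X"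
  by (simp add: closedM_def)

lemma dual_lin_add: "f \<in> carrier (dual R X) \<Longrightarrow> x \<in> carrier X \<Longrightarrow> y \<in> carrier X \<Longrightarrow> f (x \<oplus>\<^bsub>X\<^esub> y) = f x \<oplus>\<^bsub>R\<^esub> f y"
  by (simp add: dual_mem)

lemma dual_lin_smult: "f \<in> carrier (dual R X) \<Longrightarrow> a \<in> carrier R \<Longrightarrow> x \<in> carrier X \<Longrightarrow> f (a \<odot>\<^bsub>X\<^esub> x) = a \<otimes>\<^bsub>R\<^esub> f x"
  by (simp add: dual_mem)

lemma nat_map_mem:
  assumes R: "cring R" and X: "closedM R X" and x: "x \<in> carrier X"
  shows "nat_map R X x \<in> carrier (dual R (dual R X))"
proof -
  have D: "closedM R (dual R X)" using dual_closedM[OF R X] .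
  show ?thesis unfolding dual_mem[of _ R "dual R X"]
  proof (intro conjI ballI)
    show "nat_map R X x \<in> carrier (dual R X) \<rightarrow>\<^sub>E carrier R"
      using x by (auto simp: nat_map_def dual_val)
  next
    fix f g assume f: "f \<in> carrier (dual R X)" and g: "g \<in> carrier (dual R X)"
    show "nat_map R X x (f \<oplus>\<^bsub>dual R X\<^esub> g) = nat_map R X x f \<oplus>\<^bsub>R\<^esub> nat_map R X x g"
      using f g x closedM_add[OF D f g] by (simp add: nat_map_app dual_add)
  next
    fix a f assume a: "a \<in> carrier R" and f: "f \<in> carrier (dual R X)"
    show "nat_map R X x (a \<odot>\<^bsub>dual R X\<^esub> f) = a \<otimes>\<^bsub>R\<^esub> nat_map R X x f"
      using f x a closedM_smult[OF D a f] by (simp add: nat_map_app dual_smult)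
  qed
qed

lemma nat_map_add:
  assumes R: "cring R" and X: "closedM R X" and x: "x \<in> carrier X" and y: "y \<in> carrier X"
  shows "nat_map R X (x \<oplus>\<^bsub>X\<^esub> y) = nat_map R X x \<oplus>\<^bsub>dual R (dual R X)\<^esub> nat_map R X y"
  using x y by (auto simp: dual_add nat_map_def dual_lin_add)

lemma nat_map_smult:
  assumes R: "cring R" and X: "closedM R X" and a: "a \<in> carrier R" and x: "x \<in> carrier X"
  shows "nat_map R X (a \<odot>\<^bsub>X\<^esub> x) = a \<odot>\<^bsub>dual R (dual R X)\<^esub> nat_map R X x"
  using a x by (auto simp: dual_smult nat_map_def dual_lin_smult)

lemma wr_dual_reflexive:
  assumes R: "cring R" and X: "closedM R X" and W: "weakly_reflexive R X"
  shows "reflexive R (dual R X)"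
proof -
  define D where "D = dual R X"
  have D: "closedM R D" unfolding D_def using dual_closedM[OF R X] .
  have th: "nat_map R X x \<in> carrier (dual R D)" if "x \<in> carrier X" for x
    using nat_map_mem[OF R X that] by (simp add: D_def)
  have Wx: "carrier (dual R D) = nat_map R X ` carrier X" using W by (simp add: weakly_reflexive_def D_def)
  have inj: "inj_on (nat_map R D) (carrier D)"
  proof (rule inj_onI)
    fix f g assume f: "f \<in> carrier D" and g: "g \<in> carrier D" and e: "nat_map R D f = nat_map R D g"
    show "f = g"
    proof (rule dual_eqI)
      show "f \<in> carrier (dual R X)" "g \<in> carrier (dual R X)" using f g by (simp_all add: D_def)
    next
      fix x assume x: "x \<in> carrier X"
      have "nat_map R D f (nat_map R X x) = nat_map R D g (nat_map R X x)" using e by simp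
      then show "f x = g x" using th[OF x] f g by (simp add: nat_map_app D_def)
    qed
  qed
  have sub: "nat_map R D ` carrier D \<subseteq> carrier (dual R (dual R D))"
    using nat_map_mem[OF R D] by auto
  have sup: "carrier (dual R (dual R D)) \<subseteq> nat_map R D ` carrier D"
  proof
    fix \<Phi> assume P: "\<Phi> \<in> carrier (dual R (dual R D))"
    define f where "f = (\<lambda>x\<in>carrier X. \<Phi> (nat_map R X x))"
    have fD: "f \<in> carrier D" unfolding D_def dual_mem
    proof (intro conjI ballI)
      show "f \<in> carrier X \<rightarrow>\<^sub>E carrier R" unfolding f_def using dual_val[OF P th] by auto
    next
      fix x y assume x: "x \<in> carrier X" and y: "y \<in> carrier X"
      show "f (x \<oplus>\<^bsub>X\<^esub> y) = f x \<oplus>\<^bsub>R\<^esub> f y"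
        using closedM_add[OF X x y] x y nat_map_add[OF R X x y] dual_lin_add[OF P th[OF x] th[OF y]]
        by (simp add: f_def D_def)
    next
      fix a x assume a: "a \<in> carrier R" and x: "x \<in> carrier X"
      show "f (a \<odot>\<^bsub>X\<^esub> x) = a \<otimes>\<^bsub>R\<^esub> f x"
        using closedM_smult[OF X a x] x nat_map_smult[OF R X a x] dual_lin_smult[OF P a th[OF x]]
        by (simp add: f_def D_def)
    qed
    have "nat_map R D f = \<Phi>"
    proof (rule dual_eqI)
      show "nat_map R D f \<in> carrier (dual R (dual R D))" using nat_map_mem[OF R D fD] .
      show "\<Phi> \<in> carrier (dual R (dual R D))" using P .
    next
      fix \<xi> assume "\<xi> \<in> carrier (dual R D)"
      then obtain x where x: "x \<in> carrier X" and xi: "\<xi> = nat_map R X x" using Wx by auto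
      show "nat_map R D f \<xi> = \<Phi> \<xi>"
        using x th[OF x] fD by (simp add: xi nat_map_app f_def D_def)
    qed
    then show "\<Phi> \<in> nat_map R D ` carrier D" using fD by blast
  qed
  show ?thesis unfolding reflexive_def bij_betw_def D_def[symmetric] using inj sub sup by blast
qed


definition pb :: "('a, 'm) module \<Rightarrow> ('m \<Rightarrow> 'n) \<Rightarrow> ('n \<Rightarrow> 'a) \<Rightarrow> ('m \<Rightarrow> 'a)" where
  "pb A \<phi> g = (\<lambda>a\<in>carrier A. g (\<phi> a))"

lemma lin_maps_mem: "\<phi> \<in> lin_maps R A B \<Longrightarrow> a \<in> carrier A \<Longrightarrow> \<phi> a \<in> carrier B"
  by (auto simp: lin_maps_def)

lemma lin_maps_add: "\<phi> \<in> lin_maps R A B \<Longrightarrow> a \<in> carrier A \<Longrightarrow> b \<in> carrier A \<Longrightarrow> \<phi> (a \<oplus>\<^bsub>A\<^esub> b) = \<phi> a \<oplus>\<^bsub>B\<^esub> \<phi> b"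
  by (auto simp: lin_maps_def)

lemma lin_maps_smult: "\<phi> \<in> lin_maps R A B \<Longrightarrow> r \<in> carrier R \<Longrightarrow> a \<in> carrier A \<Longrightarrow> \<phi> (r \<odot>\<^bsub>A\<^esub> a) = r \<odot>\<^bsub>B\<^esub> \<phi> a"
  by (auto simp: lin_maps_def)

lemma pb_mem:
  assumes A: "closedM R A" and phi: "\<phi> \<in> lin_maps R A B" and g: "g \<in> carrier (dual R B)"
  shows "pb A \<phi> g \<in> carrier (dual R A)"
  unfolding dual_mem
proof (intro conjI ballI)
  show "pb A \<phi> g \<in> carrier A \<rightarrow>\<^sub>E carrier R"
    unfolding pb_def using dual_val[OF g lin_maps_mem[OF phi]] by auto
next
  fix x y assume x: "x \<in> carrier A" and y: "y \<in> carrier A"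
  show "pb A \<phi> g (x \<oplus>\<^bsub>A\<^esub> y) = pb A \<phi> g x \<oplus>\<^bsub>R\<^esub> pb A \<phi> g y"
    using closedM_add[OF A x y] x y lin_maps_add[OF phi x y]
      dual_lin_add[OF g lin_maps_mem[OF phi x] lin_maps_mem[OF phi y]]
    by (simp add: pb_def)
next
  fix a x assume a: "a \<in> carrier R" and x: "x \<in> carrier A"
  show "pb A \<phi> g (a \<odot>\<^bsub>A\<^esub> x) = a \<otimes>\<^bsub>R\<^esub> pb A \<phi> g x"
    using closedM_smult[OF A a x] x lin_maps_smult[OF phi a x]
      dual_lin_smult[OF g a lin_maps_mem[OF phi x]]
    by (simp add: pb_def)
qed

lemma pb_add:
  assumes phi: "\<phi> \<in> lin_maps R A B"
  shows "pb A \<phi> (h \<oplus>\<^bsub>dual R B\<^esub> h') = pb A \<phi> h \<oplus>\<^bsub>dual R A\<^esub> pb A \<phi> h'"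
  using lin_maps_mem[OF phi] by (auto simp: pb_def dual_add)

lemma pb_smult:
  assumes phi: "\<phi> \<in> lin_maps R A B"
  shows "pb A \<phi> (r \<odot>\<^bsub>dual R B\<^esub> h) = r \<odot>\<^bsub>dual R A\<^esub> pb A \<phi> h"
  using lin_maps_mem[OF phi] by (auto simp: pb_def dual_smult)

lemma pb_pb:
  assumes psi: "\<psi> \<in> lin_maps R B A" and inv: "\<And>b. b \<in> carrier B \<Longrightarrow> \<phi> (\<psi> b) = b"
    and g: "g \<in> carrier (dual R B)"
  shows "pb B \<psi> (pb A \<phi> g) = g"
proof (rule ext)
  fix b show "pb B \<psi> (pb A \<phi> g) b = g b"
    using lin_maps_mem[OF psi] inv dual_ext[OF g] by (cases "b \<in> carrier B") (auto simp: pb_def)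
qed

lemma iso_inv:
  assumes A: "closedM R A" and iso: "module_iso R A B"
  obtains \<phi> \<psi> where "\<phi> \<in> lin_maps R A B" "\<psi> \<in> lin_maps R B A"
    "\<And>a. a \<in> carrier A \<Longrightarrow> \<psi> (\<phi> a) = a" "\<And>b. b \<in> carrier B \<Longrightarrow> \<phi> (\<psi> b) = b"
proof -
  obtain \<phi> where phi: "\<phi> \<in> lin_maps R A B" and bij: "bij_betw \<phi> (carrier A) (carrier B)"
    using iso by (auto simp: module_iso_def)
  define \<psi> where "\<psi> = (\<lambda>b\<in>carrier B. inv_into (carrier A) \<phi> b)"
  have i1: "\<psi> (\<phi> a) = a" if "a \<in> carrier A" for a
    using that bij unfolding \<psi>_def by (auto simp: bij_betw_def inv_into_f_f)
  have i2: "\<phi> (\<psi> b) = b" if "b \<in> carrier B" for b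
    using that bij unfolding \<psi>_def by (auto simp: bij_betw_def f_inv_into_f)
  have pc: "\<psi> b \<in> carrier A" if "b \<in> carrier B" for b
    using that bij unfolding \<psi>_def by (auto simp: bij_betw_def inv_into_into)
  have "\<psi> \<in> lin_maps R B A"
    unfolding lin_maps_def
  proof (intro CollectI conjI ballI)
    show "\<psi> \<in> carrier B \<rightarrow>\<^sub>E carrier A" using pc by (auto simp: \<psi>_def)
  next
    fix x y assume x: "x \<in> carrier B" and y: "y \<in> carrier B"
    have "\<phi> (\<psi> x \<oplus>\<^bsub>A\<^esub> \<psi> y) = x \<oplus>\<^bsub>B\<^esub> y"
      using lin_maps_add[OF phi pc[OF x] pc[OF y]] i2 x y by simp
    then have "\<psi> (x \<oplus>\<^bsub>B\<^esub> y) = \<psi> (\<phi> (\<psi> x \<oplus>\<^bsub>A\<^esub> \<psi> y))" by simp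
    also have "\<dots> = \<psi> x \<oplus>\<^bsub>A\<^esub> \<psi> y" using i1 closedM_add[OF A pc[OF x] pc[OF y]] by simp
    finally show "\<psi> (x \<oplus>\<^bsub>B\<^esub> y) = \<psi> x \<oplus>\<^bsub>A\<^esub> \<psi> y" .
  next
    fix r x assume r: "r \<in> carrier R" and x: "x \<in> carrier B"
    have "\<phi> (r \<odot>\<^bsub>A\<^esub> \<psi> x) = r \<odot>\<^bsub>B\<^esub> x"
      using lin_maps_smult[OF phi r pc[OF x]] i2 x by simp
    then have "\<psi> (r \<odot>\<^bsub>B\<^esub> x) = \<psi> (\<phi> (r \<odot>\<^bsub>A\<^esub> \<psi> x))" by simp
    also have "\<dots> = r \<odot>\<^bsub>A\<^esub> \<psi> x" using i1 closedM_smult[OF A r pc[OF x]] by simp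
    finally show "\<psi> (r \<odot>\<^bsub>B\<^esub> x) = r \<odot>\<^bsub>A\<^esub> \<psi> x" .
  qed
  then show ?thesis using that phi i1 i2 by blast
qed

lemma transport_surj:
  assumes R: "cring R" and A: "closedM R A" and B: "closedM R B"
    and phi: "\<phi> \<in> lin_maps R A B" and psi: "\<psi> \<in> lin_maps R B A"
    and i1: "\<And>a. a \<in> carrier A \<Longrightarrow> \<psi> (\<phi> a) = a" and i2: "\<And>b. b \<in> carrier B \<Longrightarrow> \<phi> (\<psi> b) = b"
    and W: "weakly_reflexive R A"
  shows "weakly_reflexive R B"
proof -
  have DA: "closedM R (dual R A)" using dual_closedM[OF R A] .
  have sub: "nat_map R B ` carrier B \<subseteq> carrier (dual R (dual R B))"
    using nat_map_mem[OF R B] by auto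
  have sup: "carrier (dual R (dual R B)) \<subseteq> nat_map R B ` carrier B"
  proof
    fix \<xi> assume xi: "\<xi> \<in> carrier (dual R (dual R B))"
    define \<eta> where "\<eta> = (\<lambda>h\<in>carrier (dual R A). \<xi> (pb B \<psi> h))"
    have pbm: "\<And>h. h \<in> carrier (dual R A) \<Longrightarrow> pb B \<psi> h \<in> carrier (dual R B)"
      using pb_mem[OF B psi] .
    have eta: "\<eta> \<in> carrier (dual R (dual R A))"
      unfolding dual_mem[of _ R "dual R A"]
    proof (intro conjI ballI)
      show "\<eta> \<in> carrier (dual R A) \<rightarrow>\<^sub>E carrier R"
        unfolding \<eta>_def using dual_val[OF xi pbm] by auto
    next
      fix h h' assume h: "h \<in> carrier (dual R A)" and h': "h' \<in> carrier (dual R A)"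
      show "\<eta> (h \<oplus>\<^bsub>dual R A\<^esub> h') = \<eta> h \<oplus>\<^bsub>R\<^esub> \<eta> h'"
        using closedM_add[OF DA h h'] h h' pb_add[OF psi] dual_lin_add[OF xi pbm[OF h] pbm[OF h']]
        by (simp add: \<eta>_def)
    next
      fix r h assume r: "r \<in> carrier R" and h: "h \<in> carrier (dual R A)"
      show "\<eta> (r \<odot>\<^bsub>dual R A\<^esub> h) = r \<otimes>\<^bsub>R\<^esub> \<eta> h"
        using closedM_smult[OF DA r h] h pb_smult[OF psi] dual_lin_smult[OF xi r pbm[OF h]]
        by (simp add: \<eta>_def)
    qed
    then obtain a where a: "a \<in> carrier A" and ea: "\<eta> = nat_map R A a"
      using W unfolding weakly_reflexive_def by (metis imageE)
    have "\<xi> = nat_map R B (\<phi> a)"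
    proof (rule dual_eqI)
      show "\<xi> \<in> carrier (dual R (dual R B))" using xi .
      show "nat_map R B (\<phi> a) \<in> carrier (dual R (dual R B))"
        using nat_map_mem[OF R B lin_maps_mem[OF phi a]] .
    next
      fix g assume g: "g \<in> carrier (dual R B)"
      have pg: "pb A \<phi> g \<in> carrier (dual R A)" using pb_mem[OF A phi g] .
      have "\<xi> g = \<xi> (pb B \<psi> (pb A \<phi> g))" using pb_pb[OF psi i2 g] by simp
      also have "\<dots> = \<eta> (pb A \<phi> g)" using pg by (simp add: \<eta>_def)
      also have "\<dots> = g (\<phi> a)" using pg a by (simp add: ea nat_map_app pb_def)
      finally show "\<xi> g = nat_map R B (\<phi> a) g" using g by (simp add: nat_map_app)
    qed
    then show "\<xi> \<in> nat_map R B ` carrier B" using lin_maps_mem[OF phi a] by blast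
  qed
  show ?thesis unfolding weakly_reflexive_def using sub sup by blast
qed

lemma transport_refl:
  assumes R: "cring R" and A: "closedM R A" and B: "closedM R B"
    and phi: "\<phi> \<in> lin_maps R A B" and psi: "\<psi> \<in> lin_maps R B A"
    and i1: "\<And>a. a \<in> carrier A \<Longrightarrow> \<psi> (\<phi> a) = a" and i2: "\<And>b. b \<in> carrier B \<Longrightarrow> \<phi> (\<psi> b) = b"
    and W: "reflexive R A"
  shows "reflexive R B"
proof -
  have WA: "weakly_reflexive R A" using W unfolding reflexive_def weakly_reflexive_def bij_betw_def by blast
  have WB: "weakly_reflexive R B" using transport_surj[OF R A B phi psi i1 i2 WA] .
  have injA: "inj_on (nat_map R A) (carrier A)" using W unfolding reflexive_def bij_betw_def by blast
  have "inj_on (nat_map R B) (carrier B)"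
  proof (rule inj_onI)
    fix b b' assume b: "b \<in> carrier B" and b': "b' \<in> carrier B" and e: "nat_map R B b = nat_map R B b'"
    have "nat_map R A (\<psi> b) = nat_map R A (\<psi> b')"
    proof (rule dual_eqI)
      show "nat_map R A (\<psi> b) \<in> carrier (dual R (dual R A))"
        using nat_map_mem[OF R A lin_maps_mem[OF psi b]] .
      show "nat_map R A (\<psi> b') \<in> carrier (dual R (dual R A))"
        using nat_map_mem[OF R A lin_maps_mem[OF psi b']] .
    next
      fix h assume h: "h \<in> carrier (dual R A)"
      have ph: "pb B \<psi> h \<in> carrier (dual R B)" using pb_mem[OF B psi h] .
      have "nat_map R B b (pb B \<psi> h) = nat_map R B b' (pb B \<psi> h)" using e by simp
      then show "nat_map R A (\<psi> b) h = nat_map R A (\<psi> b') h"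
        using ph h b b' by (simp add: nat_map_app pb_def)
    qed
    then have "\<psi> b = \<psi> b'" using injA lin_maps_mem[OF psi b] lin_maps_mem[OF psi b'] by (meson inj_onD)
    then show "b = b'" using i2[OF b] i2[OF b'] by metis
  qed
  then show ?thesis using WB unfolding reflexive_def weakly_reflexive_def bij_betw_def by blast
qed

theorem proposition5p12:
  fixes R :: "'a ring" and M :: "('a, 'm) module"
    and N :: "nat \<Rightarrow> ('a, 'u) module" and l :: nat
  assumes "noetherian_ring R" and "local_ring R"
    and "module R M" and "fin_gen R M" and "weakly_reflexive R M"
    and "\<forall>i. module R (N i)"
    and "module_iso R M (N 0)"
    and "\<forall>i. module_iso R (N (Suc i)) (dual R (N i))"
    and "l \<ge> 1"
  shows "reflexive R (N l)"
proof -
  have R: "cring R" using assms(2) by (simp add: local_ring_def)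
  have NC: "closedM R (N i)" for i using assms(6) module_closedM by blast
  have MC: "closedM R M" using module_closedM[OF assms(3)] .
  have step: "reflexive R (N (Suc i))" if W: "weakly_reflexive R (N i)" for i
  proof -
    have rd: "reflexive R (dual R (N i))" using wr_dual_reflexive[OF R NC W] .
    obtain \<phi> \<psi> where phi: "\<phi> \<in> lin_maps R (N (Suc i)) (dual R (N i))"
      and psi: "\<psi> \<in> lin_maps R (dual R (N i)) (N (Suc i))"
      and i1: "\<And>a. a \<in> carrier (N (Suc i)) \<Longrightarrow> \<psi> (\<phi> a) = a"
      and i2: "\<And>b. b \<in> carrier (dual R (N i)) \<Longrightarrow> \<phi> (\<psi> b) = b"
      using iso_inv[OF NC assms(8)[rule_format, of i]] by blast
    show ?thesis using transport_refl[OF R dual_closedM[OF R NC] NC psi phi i2 i1 rd] .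
  qed
  have W0: "weakly_reflexive R (N 0)"
  proof -
    obtain \<phi> \<psi> where phi: "\<phi> \<in> lin_maps R M (N 0)"
      and psi: "\<psi> \<in> lin_maps R (N 0) M"
      and i1: "\<And>a. a \<in> carrier M \<Longrightarrow> \<psi> (\<phi> a) = a"
      and i2: "\<And>b. b \<in> carrier (N 0) \<Longrightarrow> \<phi> (\<psi> b) = b"
      using iso_inv[OF MC assms(7)] by blast
    show ?thesis using transport_surj[OF R MC NC phi psi i1 i2 assms(5)] .
  qed
  have Wall: "weakly_reflexive R (N i)" for i
  proof (induction i)
    case 0 then show ?case using W0 .
  next
    case (Suc i)
    then show ?case using step[OF Suc] unfolding reflexive_def weakly_reflexive_def bij_betw_def by blast
  qed
  obtain k where k: "l = Suc k" using assms(9) by (cases l) auto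
  show ?thesis using step[OF Wall[of k]] k by simp
qed

end
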